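(* Consider a position in the Strong Ramsey game $\mathcal{R}(K_{\aleph_0}^{(3)}, \hat{K}_{2,4}^{(3)})$ in which $P_2$ has claimed all edges of a copy of $\hat{K}_{2,3}^{(3)}$, $P_1$ has claimed at most $10$ edges in total, and $P_1$ does not have a threat. If it is $P_2$'s turn, then $P_2$ has a strategy from this position guaranteeing that $P_1$ never claims all edges of a copy of $\hat{K}_{2,4}^{(3)}$ (a drawing strategy).
   Context: Strong Ramsey game $\mathcal{R}(B,G)$: players $P_1$, $P_2$ alternately claim unclaimed edges of the $k$-uniform hypergraph $B$, $P_1$ first; the first to claim all edges of a copy of the finite $k$-uniform hypergraph $G$ wins; if nobody does so in finitely many moves the game is a draw. $K_{\aleph_0}^{(3)}$ is the complete $3$-uniform hypergraph on a countably infinite vertex set. $\hat{K}_{2,l}$ ($l\ge3$) is $K_{2,l}$ plus the edge joining its two vertices of degree $l$. For a graph $H$, $H^{(3)}$ is the $3$-uniform hypergraph obtained by adding one fixed new vertex (the center) to every edge of $H$. $P_1$ has a threat if she has claimed all edges of a copy of $\hat{K}_{2,4}^{(3)}$ minus one edge $e$, where the edge of the board corresponding to $e$ is claimed by neither player. *)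

theory Defs
  imports Main
begin

text \<open>Board: the complete 3-uniform hypergraph on the countably infinite vertex set nat.
  An edge of the board is a 3-element set of naturals.\<close>

definition board_edge :: "nat set \<Rightarrow> bool" where
  "board_edge e \<longleftrightarrow> card e = 3"

text \<open>S is (the edge set of) a copy of hat K_{2,l}^(3) in the board: center c, the two
  degree-l vertices u, v, and the l-element set W of remaining vertices.\<close>

definition khat_copy :: "nat \<Rightarrow> nat set set \<Rightarrow> bool" where
  "khat_copy l S \<longleftrightarrow>
     (\<exists>c u v W. distinct [c, u, v] \<and> finite W \<and> card W = l \<and> W \<inter> {c, u, v} = {} \<and>
        S = {{c, u, v}} \<union> (\<lambda>w. {c, u, w}) ` W \<union> (\<lambda>w. {c, v, w}) ` W)"

definition has_copy :: "nat \<Rightarrow> nat set set \<Rightarrow> bool" where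
  "has_copy l X \<longleftrightarrow> (\<exists>S. khat_copy l S \<and> S \<subseteq> X)"

definition threat :: "nat set set \<Rightarrow> nat set set \<Rightarrow> bool" where
  "threat R B \<longleftrightarrow> (\<exists>S e. khat_copy 4 S \<and> e \<in> S \<and> S - {e} \<subseteq> R \<and> e \<notin> R \<and> e \<notin> B)"

text \<open>Continuations of a position (R0, B0) with P2 to move: a list of moves ms, where
  move ms!i is made by P2 if i is even and by P1 if i is odd.\<close>

definition p1_edges :: "nat set set \<Rightarrow> nat set list \<Rightarrow> nat set set" where
  "p1_edges R0 ms = R0 \<union> {ms ! i | i. i < length ms \<and> odd i}"

definition p2_edges :: "nat set set \<Rightarrow> nat set list \<Rightarrow> nat set set" where
  "p2_edges B0 ms = B0 \<union> {ms ! i | i. i < length ms \<and> even i}"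

definition legal_move :: "nat set set \<Rightarrow> nat set set \<Rightarrow> nat set list \<Rightarrow> nat set \<Rightarrow> bool" where
  "legal_move R0 B0 ms e \<longleftrightarrow> board_edge e \<and> e \<notin> p1_edges R0 ms \<and> e \<notin> p2_edges B0 ms"

definition follows_p2 :: "(nat set list \<Rightarrow> nat set) \<Rightarrow> nat set list \<Rightarrow> bool" where
  "follows_p2 \<sigma> ms \<longleftrightarrow> (\<forall>i < length ms. even i \<longrightarrow> ms ! i = \<sigma> (take i ms))"

definition p1_legal :: "nat set set \<Rightarrow> nat set set \<Rightarrow> nat set list \<Rightarrow> bool" where
  "p1_legal R0 B0 ms \<longleftrightarrow>
     (\<forall>i < length ms. odd i \<longrightarrow> legal_move R0 B0 (take i ms) (ms ! i))"

definition ongoing :: "nat set set \<Rightarrow> nat set set \<Rightarrow> nat set list \<Rightarrow> bool" where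
  "ongoing R0 B0 ms \<longleftrightarrow>
     (\<forall>i < length ms. \<not> has_copy 4 (p1_edges R0 (take i ms)) \<and> \<not> has_copy 4 (p2_edges B0 (take i ms)))"

definition p2_drawing_strategy :: "nat set set \<Rightarrow> nat set set \<Rightarrow> (nat set list \<Rightarrow> nat set) \<Rightarrow> bool" where
  "p2_drawing_strategy R0 B0 \<sigma> \<longleftrightarrow>
     (\<forall>ms. follows_p2 \<sigma> ms \<and> p1_legal R0 B0 ms \<and> ongoing R0 B0 ms \<longrightarrow>
        \<not> has_copy 4 (p1_edges R0 ms) \<and>
        (even (length ms) \<and> \<not> has_copy 4 (p2_edges B0 ms) \<longrightarrow> legal_move R0 B0 ms (\<sigma> ms)))"

end

theory Submission imports Defs begin

definition kh :: "nat \<Rightarrow> nat \<Rightarrow> nat \<Rightarrow> nat set \<Rightarrow> nat set set" where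
  "kh c u v W = {{c,u,v}} \<union> (\<lambda>w. {c,u,w}) ` W \<union> (\<lambda>w. {c,v,w}) ` W"

lemma khat_copy_kh: "khat_copy l S \<longleftrightarrow> (\<exists>c u v W. distinct [c,u,v] \<and> finite W \<and> card W = l \<and> W \<inter> {c,u,v} = {} \<and> S = kh c u v W)"
  by (simp add: khat_copy_def kh_def)

lemma kh_swap: "kh c u v W = kh c v u W"
  unfolding kh_def by auto

lemma card_T: assumes "distinct [c,u,v]" "finite W" "W \<inter> {c,u,v} = {}"
  shows "card (insert {c,u,v} ((\<lambda>w. {c,u,w}) ` W)) = card W + 1"
proof -
  have inj: "inj_on (\<lambda>w. {c,u,w}) W"
    unfolding inj_on_def using assms by auto
  have "{c,u,v} \<notin> (\<lambda>w. {c,u,w}) ` W" using assms by auto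
  then show ?thesis using card_image[OF inj] assms(2) by simp
qed

lemma card_kh: assumes "distinct [c,u,v]" "finite W" "W \<inter> {c,u,v} = {}"
  shows "card (kh c u v W) = 2 * card W + 1"
proof -
  have inj1: "inj_on (\<lambda>w. {c,u,w}) W"
    unfolding inj_on_def using assms by auto
  have inj2: "inj_on (\<lambda>w. {c,v,w}) W"
    unfolding inj_on_def using assms by auto
  have d: "(\<lambda>w. {c,u,w}) ` W \<inter> (\<lambda>w. {c,v,w}) ` W = {}"
    using assms by auto
  have n: "{c,u,v} \<notin> (\<lambda>w. {c,u,w}) ` W \<union> (\<lambda>w. {c,v,w}) ` W" using assms by auto
  have "card ((\<lambda>w. {c,u,w}) ` W \<union> (\<lambda>w. {c,v,w}) ` W) = 2 * card W"
    using card_Un_disjoint[OF _ _ d] card_image[OF inj1] card_image[OF inj2] assms(2) by simp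
  then show ?thesis unfolding kh_def using n assms(2) by simp
qed

definition bad :: "nat set set \<Rightarrow> nat \<Rightarrow> nat \<Rightarrow> bool" where
  "bad R c p \<longleftrightarrow> (\<exists>c' u' v' W'. distinct [c',u',v'] \<and> finite W' \<and> card W' = 3 \<and> W' \<inter> {c',u',v'} = {}
      \<and> kh c' u' v' W' \<subseteq> R \<and> {c',u'} = {c,p})"

lemma S2_no_v:
  assumes "distinct [c2,u2,v2]" "W2 \<inter> {c2,u2,v2} = {}" "{c2,u2} = {c,u}" "v \<notin> {c,u}"
    "{c,u,v} \<notin> kh c2 u2 v2 W2" "f \<in> kh c2 u2 v2 W2" "v \<in> f"
  shows False
proof -
  have e: "{c2,u2,x} = {c,u,x}" for x using assms(3) by auto
  have "v = v2 \<or> (\<exists>z\<in>W2. f = {c2,u2,z} \<and> v = z) \<or> (\<exists>z\<in>W2. f = {c2,v2,z} \<and> (v = v2 \<or> v = z))"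
    using assms(3,4,6,7) unfolding kh_def by auto
  then show False using assms(5) unfolding kh_def by (auto simp: e)
qed

lemma not_both_bad:
  assumes "finite R" "card R \<le> 10" "{c,u,v} \<notin> R" "distinct [c,u,v]" "bad R c u" "bad R c v"
  shows False
proof -
  obtain c1 u1 v1 W1 where 1: "distinct [c1,u1,v1]" "finite W1" "card W1 = 3" "W1 \<inter> {c1,u1,v1} = {}"
      "kh c1 u1 v1 W1 \<subseteq> R" "{c1,u1} = {c,v}"
    using assms(6) unfolding bad_def by blast
  obtain c2 u2 v2 W2 where 2: "distinct [c2,u2,v2]" "finite W2" "card W2 = 3" "W2 \<inter> {c2,u2,v2} = {}"
      "kh c2 u2 v2 W2 \<subseteq> R" "{c2,u2} = {c,u}"
    using assms(5) unfolding bad_def by blast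
  define T where "T = insert {c1,u1,v1} ((\<lambda>w. {c1,u1,w}) ` W1)"
  have cT: "card T = 4" unfolding T_def using card_T[OF 1(1,2,4)] 1(3) by simp
  have cS: "card (kh c2 u2 v2 W2) = 7" using card_kh[OF 2(1,2,4)] 2(3) by simp
  have TR: "T \<subseteq> R" using 1(5) unfolding T_def kh_def by auto
  have Tv: "f \<in> T \<Longrightarrow> v \<in> f" for f using 1(6) unfolding T_def by auto
  have nS: "{c,u,v} \<notin> kh c2 u2 v2 W2" using 2(5) assms(3) by auto
  have disj: "T \<inter> kh c2 u2 v2 W2 = {}"
  proof (rule ccontr)
    assume "T \<inter> kh c2 u2 v2 W2 \<noteq> {}"
    then obtain f where "f \<in> T" "f \<in> kh c2 u2 v2 W2" by blast
    then show False using S2_no_v[OF 2(1,4,6) _ nS, of f] Tv assms(4) by auto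
  qed
  have "card (T \<union> kh c2 u2 v2 W2) = 11"
    using card_Un_disjoint[OF _ _ disj] cT cS 1(2) 2(2) unfolding T_def kh_def by simp
  moreover have "card (T \<union> kh c2 u2 v2 W2) \<le> card R"
    using card_mono[OF assms(1)] TR 2(5) by simp
  ultimately show False using assms(2) by simp
qed


locale game =
  fixes R B :: "nat set set" and c u v h h' :: nat and W0 :: "nat set"
  assumes finR: "finite R" and finB: "finite B"
  and edges: "\<forall>e\<in>R\<union>B. board_edge e"
  and noThreat: "\<not> threat R B"
  and noCopyR: "\<not> has_copy 4 R"
  and dist: "distinct [c,u,v]" and finW0: "finite W0" and cardW0: "card W0 = 3"
  and W0disj: "W0 \<inter> {c,u,v} = {}"
  and S0B: "kh c u v W0 \<subseteq> B"
  and hh': "(h = u \<and> h' = v) \<or> (h = v \<and> h' = u)"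
  and notbad: "\<not> bad R c h'"
begin

definition V0 where "V0 = \<Union>(R \<union> B)"
definition H' where "H' F = (\<lambda>x. {c,h',x}) ` F"

lemma finV0: "finite V0"
proof -
  have "\<forall>e\<in>R\<union>B. finite e" using edges unfolding board_edge_def
    by (metis card.infinite zero_neq_numeral)
  then show ?thesis unfolding V0_def using finR finB by auto
qed

lemma inV0: "c \<in> V0" "u \<in> V0" "v \<in> V0" "h \<in> V0" "h' \<in> V0" "W0 \<subseteq> V0"
proof -
  have "{c,u,v} \<in> B" using S0B unfolding kh_def by auto
  then show "c \<in> V0" "u \<in> V0" "v \<in> V0" unfolding V0_def by auto
  then show "h \<in> V0" "h' \<in> V0" using hh' by auto
  show "W0 \<subseteq> V0"
  proof
    fix w assume "w \<in> W0"
    then have "{c,u,w} \<in> B" using S0B unfolding kh_def by auto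
    then show "w \<in> V0" unfolding V0_def by auto
  qed
qed

lemma hne: "h \<noteq> h'" "c \<noteq> h" "c \<noteq> h'" using hh' dist by auto

lemma Rc_vertex: assumes "F \<inter> V0 = {}" "f \<in> R \<union> H' F" "z \<in> f" "z \<notin> V0"
  shows "f = {c,h',z} \<and> z \<in> F"
proof -
  have "f \<notin> R" using assms(2-4) V0_def by auto
  then obtain x where "x \<in> F" "f = {c,h',x}" using assms(2) H'_def by auto
  then show ?thesis using assms(3,4) inV0 by auto
qed

lemma step4:
  assumes F: "F \<inter> V0 = {}"
  and d: "distinct [c',u',v']" "W' \<inter> {c',u',v'} = {}" "finite W'" "card W' = 4"
  and Se: "kh c' u' v' W' - {e} \<subseteq> R \<union> H' F"
  and y: "y \<in> W'" "y \<notin> V0" and e: "e = {c',v',y}"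
  and V: "c' \<in> V0" "u' \<in> V0" "v' \<in> V0"
  and Wo: "\<forall>x\<in>W'. x \<notin> V0 \<longrightarrow> e \<in> {{c',u',x},{c',v',x}}"
  shows False
proof -
  have "{c',u',y} \<in> kh c' u' v' W'" using y unfolding kh_def by auto
  moreover have "{c',u',y} \<noteq> e" using e d y by auto
  ultimately have "{c',u',y} \<in> R \<union> H' F" using Se by auto
  then have "{c',u',y} = {c,h',y}" using Rc_vertex[OF F, of "{c',u',y}" y] y by auto
  moreover have "y \<notin> {c',u'}" "y \<notin> {c,h'}" using d y V inV0 by auto
  ultimately have cu: "{c',u'} = {c,h'}" by auto
  have sub: "kh c' u' v' (W' - {y}) \<subseteq> R"
  proof
    fix f assume f: "f \<in> kh c' u' v' (W' - {y})"
    then have "f \<in> kh c' u' v' W'" unfolding kh_def by auto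
    moreover have "f \<noteq> e" using f e d y unfolding kh_def by auto
    ultimately have fR: "f \<in> R \<union> H' F" using Se by auto
    show "f \<in> R"
    proof (rule ccontr)
      assume "f \<notin> R"
      then obtain x where x: "x \<in> F" "f = {c,h',x}" using fR H'_def by auto
      then have xV: "x \<notin> V0" using F by auto
      have "x \<in> f" using x by auto
      then have "x \<in> W' - {y}" using f V xV unfolding kh_def by auto
      then have "e \<in> {{c',u',x},{c',v',x}}" using Wo xV by auto
      then show False using e \<open>x \<in> W' - {y}\<close> d y by auto
    qed
  qed
  have "bad R c h'" unfolding bad_def
    apply (rule exI[of _ c'], rule exI[of _ u'], rule exI[of _ v'], rule exI[of _ "W' - {y}"])
    using d y sub cu by auto
  then show False using notbad by simp
qed


lemma no_threat: assumes F: "F \<inter> V0 = {}" and BB: "B \<subseteq> Bc"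
  shows "\<not> threat (R \<union> H' F) Bc"
proof
  assume "threat (R \<union> H' F) Bc"
  then obtain S e where "khat_copy 4 S" and eS: "e \<in> S" and Se: "S - {e} \<subseteq> R \<union> H' F"
     and eR: "e \<notin> R \<union> H' F" and eB: "e \<notin> Bc"
    unfolding threat_def by blast
  then obtain c' u' v' W' where d: "distinct [c',u',v']" "finite W'" "card W' = 4"
    "W' \<inter> {c',u',v'} = {}" and S: "S = kh c' u' v' W'"
    unfolding khat_copy_kh by blast
  obtain y1 y2 where y: "y1 \<in> W'" "y2 \<in> W'" "y1 \<noteq> y2"
  proof -
    have "card W' > 1" using d by simp
    then show ?thesis using that card_le_Suc0_iff_eq[OF d(2)] by (auto simp: not_le[symmetric])
  qed
  have two: "False" if "a \<in> S" "b \<in> S" "a \<noteq> b" "z \<in> a" "z \<in> b" "z \<notin> V0"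
     "a \<noteq> e" "b \<noteq> e" for a b z
  proof -
    have "a = {c,h',z}" using Rc_vertex[OF F, of a z] that Se by auto
    moreover have "b = {c,h',z}" using Rc_vertex[OF F, of b z] that Se by auto
    ultimately show False using that by simp
  qed
  have three: "False" if "a \<in> S" "b \<in> S" "a' \<in> S" "a \<noteq> b" "a \<noteq> a'" "b \<noteq> a'"
     "z \<in> a" "z \<in> b" "z \<in> a'" "z \<notin> V0" for a b a' z
    using two[of a b z] two[of a a' z] two[of b a' z] that by blast
  have mem: "{c',u',v'} \<in> S" "{c',u',y1} \<in> S" "{c',u',y2} \<in> S" "{c',v',y1} \<in> S" "{c',v',y2} \<in> S"
    using S y unfolding kh_def by auto
  have neq: "{c',u',v'} \<noteq> {c',u',y1}" "{c',u',v'} \<noteq> {c',u',y2}" "{c',u',y1} \<noteq> {c',u',y2}"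
     "{c',u',v'} \<noteq> {c',v',y1}" "{c',u',v'} \<noteq> {c',v',y2}" "{c',v',y1} \<noteq> {c',v',y2}"
    using d y by auto
  have cV: "c' \<in> V0" using three[OF mem(1,2,3) neq(1,2,3), of c'] by auto
  have uV: "u' \<in> V0" using three[OF mem(1,2,3) neq(1,2,3), of u'] by auto
  have vV: "v' \<in> V0" using three[OF mem(1,4,5) neq(4,5,6), of v'] by auto
  have Wo: "\<forall>x\<in>W'. x \<notin> V0 \<longrightarrow> e \<in> {{c',u',x},{c',v',x}}"
  proof (intro ballI impI)
    fix x assume x: "x \<in> W'" "x \<notin> V0"
    have "{c',u',x} \<in> S" "{c',v',x} \<in> S" using S x unfolding kh_def by auto
    moreover have "{c',u',x} \<noteq> {c',v',x}" using d x by auto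
    ultimately show "e \<in> {{c',u',x},{c',v',x}}" using two[of "{c',u',x}" "{c',v',x}" x] x by auto
  qed
  show False
  proof (cases "\<exists>y\<in>W'. y \<notin> V0")
    case True
    then obtain y where y: "y \<in> W'" "y \<notin> V0" by blast
    then have "e = {c',u',y} \<or> e = {c',v',y}" using Wo by auto
    then show False
    proof
      assume "e = {c',v',y}"
      then show False using step4[OF F d(1,4,2,3) _ y _ cV uV vV Wo] Se S by auto
    next
      assume e: "e = {c',u',y}"
      have d': "distinct [c',v',u']" "W' \<inter> {c',v',u'} = {}" using d by auto
      have Wo': "\<forall>x\<in>W'. x \<notin> V0 \<longrightarrow> e \<in> {{c',v',x},{c',u',x}}" using Wo by auto
      show False using step4[OF F d'(1,2) d(2,3) _ y e cV vV uV Wo'] Se S kh_swap by metis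
    qed
  next
    case False
    have "S - {e} \<subseteq> R"
    proof
      fix f assume f: "f \<in> S - {e}"
      then have fR: "f \<in> R \<union> H' F" using Se by auto
      show "f \<in> R"
      proof (rule ccontr)
        assume "f \<notin> R"
        then obtain x where x: "x \<in> F" "f = {c,h',x}" using fR H'_def by auto
        then have "x \<notin> V0" using F by auto
        moreover have "x \<in> {c',u',v'} \<union> W'" using f x S unfolding kh_def by auto
        ultimately show False using False cV uV vV by auto
      qed
    qed
    then have "threat R B" unfolding threat_def using \<open>khat_copy 4 S\<close> eS eR eB BB by blast
    then show False using noThreat by simp
  qed
qed

end
lemma p1_snoc: "p1_edges R0 (ms@[x]) = p1_edges R0 ms \<union> (if odd (length ms) then {x} else {})"
proof -
  have "{(ms@[x]) ! i | i. i < length (ms@[x]) \<and> odd i} = {ms ! i | i. i < length ms \<and> odd i} \<union> (if odd (length ms) then {x} else {})"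
  proof (intro equalityI subsetI)
    fix y assume "y \<in> {(ms@[x]) ! i | i. i < length (ms@[x]) \<and> odd i}"
    then obtain i where i: "i < Suc (length ms)" "odd i" "y = (ms@[x]) ! i" by auto
    show "y \<in> {ms ! i | i. i < length ms \<and> odd i} \<union> (if odd (length ms) then {x} else {})"
    proof (cases "i < length ms")
      case True then show ?thesis using i by (auto simp: nth_append)
    next
      case False then have "i = length ms" using i by simp
      then show ?thesis using i by simp
    qed
  next
    fix y assume "y \<in> {ms ! i | i. i < length ms \<and> odd i} \<union> (if odd (length ms) then {x} else {})"
    then show "y \<in> {(ms@[x]) ! i | i. i < length (ms@[x]) \<and> odd i}"
    proof (cases "y \<in> {ms ! i | i. i < length ms \<and> odd i}")
      case True then obtain i where "i < length ms" "odd i" "y = ms ! i" by auto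
      then show ?thesis by (auto simp: nth_append intro!: exI[of _ i])
    next
      case False then have "odd (length ms)" "y = x" using \<open>y \<in> _\<close> by (auto split: if_splits)
      then show ?thesis by (auto intro!: exI[of _ "length ms"])
    qed
  qed
  then show ?thesis unfolding p1_edges_def by auto
qed

lemma p2_snoc: "p2_edges B0 (ms@[x]) = p2_edges B0 ms \<union> (if even (length ms) then {x} else {})"
proof -
  have "{(ms@[x]) ! i | i. i < length (ms@[x]) \<and> even i} = {ms ! i | i. i < length ms \<and> even i} \<union> (if even (length ms) then {x} else {})"
  proof (intro equalityI subsetI)
    fix y assume "y \<in> {(ms@[x]) ! i | i. i < length (ms@[x]) \<and> even i}"
    then obtain i where i: "i < Suc (length ms)" "even i" "y = (ms@[x]) ! i" by auto
    show "y \<in> {ms ! i | i. i < length ms \<and> even i} \<union> (if even (length ms) then {x} else {})"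
    proof (cases "i < length ms")
      case True then show ?thesis using i by (auto simp: nth_append)
    next
      case False then have "i = length ms" using i by simp
      then show ?thesis using i by simp
    qed
  next
    fix y assume "y \<in> {ms ! i | i. i < length ms \<and> even i} \<union> (if even (length ms) then {x} else {})"
    then show "y \<in> {(ms@[x]) ! i | i. i < length (ms@[x]) \<and> even i}"
    proof (cases "y \<in> {ms ! i | i. i < length ms \<and> even i}")
      case True then obtain i where "i < length ms" "even i" "y = ms ! i" by auto
      then show ?thesis by (auto simp: nth_append intro!: exI[of _ i])
    next
      case False then have "even (length ms)" "y = x" using \<open>y \<in> _\<close> by (auto split: if_splits)
      then show ?thesis by (auto intro!: exI[of _ "length ms"])
    qed
  qed
  then show ?thesis unfolding p2_edges_def by auto
qed

lemma follows_snoc: "follows_p2 s (ms@[x]) \<longleftrightarrow> follows_p2 s ms \<and> (even (length ms) \<longrightarrow> x = s ms)"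
  unfolding follows_p2_def by (auto simp: nth_append less_Suc_eq)

lemma p1_legal_snoc: "p1_legal R0 B0 (ms@[x]) \<longleftrightarrow> p1_legal R0 B0 ms \<and> (odd (length ms) \<longrightarrow> legal_move R0 B0 ms x)"
  unfolding p1_legal_def by (auto simp: nth_append less_Suc_eq)

lemma ongoing_snoc: "ongoing R0 B0 (ms@[x]) \<longleftrightarrow> ongoing R0 B0 ms \<and> \<not> has_copy 4 (p1_edges R0 ms) \<and> \<not> has_copy 4 (p2_edges B0 ms)"
  unfolding ongoing_def by (auto simp: less_Suc_eq)

lemma p1_sub: "p1_edges R0 ms \<subseteq> R0 \<union> set ms"
  unfolding p1_edges_def by auto
lemma p2_sub: "p2_edges B0 ms \<subseteq> B0 \<union> set ms"
  unfolding p2_edges_def by auto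


context game begin

definition fresh :: "nat set \<Rightarrow> nat" where "fresh A = (SOME n. n \<notin> A)"

lemma fresh: "finite A \<Longrightarrow> fresh A \<notin> A"
  unfolding fresh_def by (rule someI_ex) (simp add: ex_new_if_finite)

definition strat :: "nat set list \<Rightarrow> nat set" where
  "strat ms = (if \<exists>e. legal_move R B ms e \<and> has_copy 4 (p2_edges B ms \<union> {e})
     then (SOME e. legal_move R B ms e \<and> has_copy 4 (p2_edges B ms \<union> {e}))
     else {c, h, fresh (V0 \<union> \<Union>(set ms))})"

lemma strat_else: assumes "\<not> (\<exists>e. legal_move R B ms e \<and> has_copy 4 (p2_edges B ms \<union> {e}))"
  shows "strat ms = {c, h, fresh (V0 \<union> \<Union>(set ms))}"
  unfolding strat_def by (rule if_not_P[OF assms])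

lemma strat_finite: "finite (strat ms)"
proof (cases "\<exists>e. legal_move R B ms e \<and> has_copy 4 (p2_edges B ms \<union> {e})")
  case True
  then have "legal_move R B ms (strat ms)" unfolding strat_def by (metis (mono_tags, lifting) someI_ex)
  then show ?thesis unfolding legal_move_def board_edge_def by (metis card.infinite zero_neq_numeral)
next
  case False then show ?thesis unfolding strat_def by auto
qed

lemma ms_finite: assumes "follows_p2 strat ms" "p1_legal R B ms" shows "finite (\<Union>(set ms))"
proof -
  have "finite (ms ! i)" if "i < length ms" for i
  proof (cases "even i")
    case True then show ?thesis using assms(1) that strat_finite unfolding follows_p2_def by metis
  next
    case False
    then have "legal_move R B (take i ms) (ms ! i)" using assms(2) that unfolding p1_legal_def by blast
    then show ?thesis unfolding legal_move_def board_edge_def by (metis card.infinite zero_neq_numeral)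
  qed
  then show ?thesis by (metis finite_Union finite_set in_set_conv_nth)
qed

lemma strat_legal:
  assumes "follows_p2 strat ms" "p1_legal R B ms"
  shows "legal_move R B ms (strat ms)"
proof (cases "\<exists>e. legal_move R B ms e \<and> has_copy 4 (p2_edges B ms \<union> {e})")
  case True
  then show ?thesis unfolding strat_def by (metis (mono_tags, lifting) someI_ex)
next
  case False
  define w where "w = fresh (V0 \<union> \<Union>(set ms))"
  have w: "w \<notin> V0 \<union> \<Union>(set ms)" unfolding w_def using fresh finV0 ms_finite[OF assms] by blast
  have s: "strat ms = {c,h,w}" using strat_else[OF False] unfolding w_def .
  have "w \<noteq> c" "w \<noteq> h" using w inV0 by auto
  then have "card {c,h,w} = 3" using hne by auto
  moreover have "{c,h,w} \<notin> R \<union> B \<union> set ms" using w unfolding V0_def by auto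
  ultimately show ?thesis unfolding s legal_move_def board_edge_def using p1_sub[of R ms] p2_sub[of B ms] by auto
qed

definition Einv where "Einv ms \<longleftrightarrow> (\<exists>e. legal_move R B ms e \<and> has_copy 4 (p2_edges B ms \<union> {e}))
   \<or> (\<exists>F. F \<inter> V0 = {} \<and> p1_edges R ms = R \<union> H' F)"

definition Oinv where "Oinv ms \<longleftrightarrow> has_copy 4 (p2_edges B ms)
   \<or> (\<exists>F w. F \<inter> V0 = {} \<and> w \<notin> V0 \<and> w \<notin> F \<and> p1_edges R ms = R \<union> H' F
          \<and> {c,h,w} \<in> p2_edges B ms \<and> {c,h',w} \<notin> p2_edges B ms)"

lemma win_copy: assumes "w \<notin> V0" shows "has_copy 4 (B \<union> {{c,h,w},{c,h',w}})"
proof -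
  have wW: "w \<notin> W0" using assms inV0 by auto
  have "khat_copy 4 (kh c u v (insert w W0))" unfolding khat_copy_kh
    apply (rule exI[of _ c], rule exI[of _ u], rule exI[of _ v], rule exI[of _ "insert w W0"])
    using dist finW0 cardW0 W0disj assms inV0 wW by auto
  moreover have "kh c u v (insert w W0) \<subseteq> B \<union> {{c,h,w},{c,h',w}}"
    using S0B hh' unfolding kh_def by auto
  ultimately show ?thesis unfolding has_copy_def by blast
qed

lemma main:
  "follows_p2 strat ms \<Longrightarrow> p1_legal R B ms \<Longrightarrow> ongoing R B ms \<Longrightarrow>
   \<not> has_copy 4 (p1_edges R ms) \<and> (even (length ms) \<longrightarrow> Einv ms) \<and> (odd (length ms) \<longrightarrow> Oinv ms)"
proof (induction ms rule: rev_induct)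
  case Nil
  have "p1_edges R [] = R \<union> H' {}" unfolding p1_edges_def H'_def by simp
  then show ?case using noCopyR unfolding Einv_def by (auto simp: H'_def p1_edges_def)
next
  case (snoc x ms)
  have f: "follows_p2 strat ms" and fx: "even (length ms) \<Longrightarrow> x = strat ms"
    using snoc.prems(1) follows_snoc by auto
  have l: "p1_legal R B ms" and lx: "odd (length ms) \<Longrightarrow> legal_move R B ms x"
    using snoc.prems(2) p1_legal_snoc by auto
  have o: "ongoing R B ms" and n1: "\<not> has_copy 4 (p1_edges R ms)" and n2: "\<not> has_copy 4 (p2_edges B ms)"
    using snoc.prems(3) ongoing_snoc by auto
  have IH: "(even (length ms) \<longrightarrow> Einv ms) \<and> (odd (length ms) \<longrightarrow> Oinv ms)"
    using snoc.IH[OF f l o] by blast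
  show ?case
  proof (cases "even (length ms)")
    case True
    have p1: "p1_edges R (ms@[x]) = p1_edges R ms" using True p1_snoc by simp
    have p2: "p2_edges B (ms@[x]) = p2_edges B ms \<union> {x}" using True p2_snoc by simp
    have "Oinv (ms@[x])"
    proof (cases "\<exists>e. legal_move R B ms e \<and> has_copy 4 (p2_edges B ms \<union> {e})")
      case C: True
      then have "has_copy 4 (p2_edges B ms \<union> {x})" using fx[OF True] unfolding strat_def
        by (metis (mono_tags, lifting) someI_ex)
      then show ?thesis unfolding Oinv_def p2 by simp
    next
      case C: False
      then obtain F where F: "F \<inter> V0 = {}" "p1_edges R ms = R \<union> H' F"
        using IH True unfolding Einv_def by blast
      define w where "w = fresh (V0 \<union> \<Union>(set ms))"
      have w: "w \<notin> V0 \<union> \<Union>(set ms)" unfolding w_def using fresh finV0 ms_finite[OF f l] by blast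
      have xs: "x = {c,h,w}" using strat_else[OF C] fx[OF True] unfolding w_def by simp
      have wF: "w \<notin> F"
      proof
        assume "w \<in> F"
        then have "{c,h',w} \<in> R \<union> set ms" using F(2) p1_sub[of R ms] H'_def by auto
        then show False using w unfolding V0_def by auto
      qed
      have "{c,h',w} \<notin> p2_edges B ms" using p2_sub[of B ms] w unfolding V0_def by auto
      moreover have "h' \<notin> {c,h,w}" using hne w inV0 by auto
      then have "{c,h',w} \<noteq> {c,h,w}" by blast
      ultimately have Cn: "{c,h',w} \<notin> p2_edges B (ms@[x])" using p2 xs by simp
      have A: "p1_edges R (ms@[x]) = R \<union> H' F" using p1 F by simp
      have Bm: "{c,h,w} \<in> p2_edges B (ms@[x])" using p2 xs by simp
      show ?thesis unfolding Oinv_def using F(1) wF w A Bm Cn by blast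
    qed
    then show ?thesis using n1 p1 True by simp
  next
    case False
    have p1: "p1_edges R (ms@[x]) = p1_edges R ms \<union> {x}" using False p1_snoc by simp
    have p2: "p2_edges B (ms@[x]) = p2_edges B ms" using False p2_snoc by simp
    obtain F w where F: "F \<inter> V0 = {}" "w \<notin> V0" "w \<notin> F" "p1_edges R ms = R \<union> H' F"
        "{c,h,w} \<in> p2_edges B ms" "{c,h',w} \<notin> p2_edges B ms"
      using IH False n2 unfolding Oinv_def by blast
    have nt: "\<not> threat (p1_edges R ms) (p2_edges B ms)"
      using no_threat[OF F(1), of "p2_edges B ms"] F(4) unfolding p2_edges_def by auto
    have lm: "legal_move R B ms x" using lx False by simp
    have nc: "\<not> has_copy 4 (p1_edges R ms \<union> {x})"
    proof
      assume "has_copy 4 (p1_edges R ms \<union> {x})"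
      then obtain S where S: "khat_copy 4 S" "S \<subseteq> p1_edges R ms \<union> {x}" unfolding has_copy_def by blast
      show False
      proof (cases "x \<in> S")
        case True
        then have "threat (p1_edges R ms) (p2_edges B ms)" unfolding threat_def
          using S lm unfolding legal_move_def by blast
        then show False using nt by simp
      next
        case False
        then show False using n1 S unfolding has_copy_def by blast
      qed
    qed
    have "Einv (ms@[x])"
    proof (cases "x = {c,h',w}")
      case True
      have "p1_edges R (ms@[x]) = R \<union> H' (insert w F)" using p1 F(4) True H'_def by auto
      moreover have "insert w F \<inter> V0 = {}" using F by auto
      ultimately show ?thesis unfolding Einv_def by blast
    next
      case xne: False
      have "w \<noteq> c" "w \<noteq> h'" using F(2) inV0 by auto
      then have "card {c,h',w} = 3" using hne by auto
      moreover have "{c,h',w} \<notin> R"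
      proof
        assume "{c,h',w} \<in> R" then show False using F(2) unfolding V0_def by auto
      qed
      moreover have "{c,h',w} \<notin> H' F"
      proof
        assume "{c,h',w} \<in> H' F"
        then obtain y where "y \<in> F" "{c,h',w} = {c,h',y}" unfolding H'_def by auto
        then have "w \<in> {c,h',y}" "y \<in> F" by blast+
        then show False using \<open>w \<noteq> c\<close> \<open>w \<noteq> h'\<close> F(3) by auto
      qed
      ultimately have "legal_move R B (ms@[x]) {c,h',w}"
        unfolding legal_move_def board_edge_def p1 p2 F(4) using F(6) xne by auto
      moreover have "has_copy 4 (p2_edges B (ms@[x]) \<union> {{c,h',w}})"
      proof -
        have "B \<union> {{c,h,w},{c,h',w}} \<subseteq> p2_edges B (ms@[x]) \<union> {{c,h',w}}"
          using p2 F(5) unfolding p2_edges_def by auto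
        then show ?thesis using win_copy[OF F(2)] unfolding has_copy_def by blast
      qed
      ultimately show ?thesis unfolding Einv_def by blast
    qed
    then show ?thesis using nc p1 False by simp
  qed
qed

lemma drawing: "p2_drawing_strategy R B strat"
  unfolding p2_drawing_strategy_def
  using main strat_legal by blast

end


theorem corollary3p3:
  fixes R B :: "nat set set"
  assumes "finite R" and "finite B"
    and "\<forall>e \<in> R \<union> B. board_edge e"
    and "R \<inter> B = {}"
    and "card R = card B + 1"
    and "\<not> has_copy 4 R" and "\<not> has_copy 4 B"
    and "has_copy 3 B"
    and "card R \<le> 10"
    and "\<not> threat R B"
  shows "\<exists>\<sigma>. p2_drawing_strategy R B \<sigma>"
proof -
  obtain S0 where "khat_copy 3 S0" "S0 \<subseteq> B" using assms(8) unfolding has_copy_def by blast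
  then obtain c u v W0 where d: "distinct [c,u,v]" "finite W0" "card W0 = 3" "W0 \<inter> {c,u,v} = {}"
    and sub: "kh c u v W0 \<subseteq> B" unfolding khat_copy_kh by blast
  have "{c,u,v} \<in> B" using sub unfolding kh_def by auto
  then have nR: "{c,u,v} \<notin> R" using assms(4) by blast
  have nb: "\<not> (bad R c u \<and> bad R c v)" using not_both_bad[OF assms(1,9) nR d(1)] by blast
  show ?thesis
  proof (cases "bad R c v")
    case True
    then have "\<not> bad R c u" using nb by blast
    then interpret g: game R B c u v v u W0
      using assms d sub by unfold_locales auto
    show ?thesis using g.drawing by blast
  next
    case False
    then interpret g: game R B c u v u v W0
      using assms d sub by unfold_locales auto
    show ?thesis using g.drawing by blast
  qed
qed

end
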